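(* For every integer $n\ge 0$, $$l_{3n}(1,2,-1,q)\,[3n+1]=(-1)^n q^{\frac{n(3n-1)}{2}}[n+1],$$ $$l_{3n+1}(1,2,-1,q)\,[3n+2]=(-1)^n q^{\frac{n(3n+1)}{2}}[n+1]\,(1+q^{n+1}),$$ $$l_{3n+2}(1,2,-1,q)\,[3n+3]=(-1)^n q^{\frac{3n^2+5n+4}{2}}[n+1].$$
   Context: $q$ is an indeterminate; $[n]=\frac{1-q^n}{1-q}$, $[n]!=[1]\cdots[n]$, $[0]!=1$. For an integer $m\ge0$, $$l_n(x,m,s,q)=\sum_{k=0}^{\lfloor n/2\rfloor}s^k q^{\binom k2}\frac{[n]!}{[k]!\,[n-2k]!}\,\frac{[m+n-k-1]!}{[m+n-1]!}\,x^{n-2k}\quad (n\ge1),\qquad l_0(x,m,s,q)=1.$$ *)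

theory Defs
  imports "HOL-Computational_Algebra.Polynomial" "HOL-Computational_Algebra.Fraction_Field"
begin

definition qX :: "int poly fract" where
  "qX = Fract [:0, 1:] 1"

definition qint :: "'a::field \<Rightarrow> nat \<Rightarrow> 'a" where
  "qint q n = (1 - q ^ n) / (1 - q)"

definition qfact :: "'a::field \<Rightarrow> nat \<Rightarrow> 'a" where
  "qfact q n = (\<Prod>i = 1..n. qint q i)"

definition lpoly :: "nat \<Rightarrow> 'a::field \<Rightarrow> nat \<Rightarrow> 'a \<Rightarrow> 'a \<Rightarrow> 'a" where
  "lpoly n x m s q =
     (if n = 0 then 1 else
      (\<Sum>k = 0..n div 2. s ^ k * q ^ (k choose 2)
          * (qfact q n / (qfact q k * qfact q (n - 2 * k)))
          * (qfact q (m + n - k - 1) / qfact q (m + n - 1))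
          * x ^ (n - 2 * k)))"

end

theory Submission
  imports Defs
begin

lemma qX_pow: "qX ^ i = Fract ([:0,1:] ^ i) 1"
  by (induction i) (auto simp: qX_def One_fract_def)

lemma qX_nz: "qX \<noteq> 0"
  by (simp add: qX_def Zero_fract_def eq_fract)

lemma qX_pow_ne1: "i \<ge> 1 \<Longrightarrow> qX ^ i \<noteq> 1"
proof
  assume i: "i \<ge> 1" and h: "qX ^ i = 1"
  hence "([:0,1:] ^ i :: int poly) = 1"
    by (simp add: qX_pow One_fract_def eq_fract)
  hence "degree ([:0,1:] ^ i :: int poly) = 0" by simp
  moreover have "degree ([:0,1:] ^ i :: int poly) = i"
    by (simp add: degree_power_eq)
  ultimately show False using i by simp
qed



definition qb :: "'a::field \<Rightarrow> nat \<Rightarrow> nat \<Rightarrow> 'a" where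
  "qb q N k = (if k \<le> N then qfact q N / (qfact q k * qfact q (N - k)) else 0)"

lemma qfact_0[simp]: "qfact q 0 = 1" by (simp add: qfact_def)
lemma qfact_Suc: "qfact q (Suc n) = qfact q n * qint q (Suc n)"
  by (simp add: qfact_def prod.nat_ivl_Suc')

context
  fixes q :: "'a::field"
  assumes qn: "\<And>i. i \<ge> 1 \<Longrightarrow> q ^ i \<noteq> 1"
begin

lemma q1: "q \<noteq> 1" using qn[of 1] by simp

lemma qint_nz: "i \<ge> 1 \<Longrightarrow> qint q i \<noteq> 0"
  using qn[of i] q1 by (simp add: qint_def)

lemma qfact_nz: "qfact q n \<noteq> 0"
  by (induction n) (simp_all add: qfact_Suc qint_nz)

lemma qint_Suc_mult: "qint q n * (1 - q) = 1 - q ^ n"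
  using q1 by (simp add: qint_def)

lemma qb_P1: "qb q (Suc N) (Suc k) = q ^ Suc k * qb q N (Suc k) + qb q N k"
proof (cases "Suc k \<le> N")
  case True
  then obtain d where d: "N = Suc k + d" using le_Suc_ex by blast
  have e1: "Suc N - Suc k = Suc d" using d by simp
  have e2: "N - Suc k = d" using d by simp
  have e3: "N - k = Suc d" using d by simp
  have key: "qint q (Suc N) = q ^ Suc k * qint q (Suc d) + qint q (Suc k)"
    using q1 d by (simp add: qint_def field_simps power_add)
  show ?thesis using True
    apply (simp add: qb_def e1 e2 e3 qfact_Suc)
    apply (simp add: qfact_nz qint_nz field_simps)
    apply (simp add: key algebra_simps)
    done
next
  case False
  then show ?thesis by (cases "k = N") (auto simp: qb_def qfact_nz)
qed

lemma qb_P2: "qb q (Suc N) (Suc k) = qb q N (Suc k) + q ^ (N - k) * qb q N k"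
proof (cases "Suc k \<le> N")
  case True
  then obtain d where d: "N = Suc k + d" using le_Suc_ex by blast
  have e1: "Suc N - Suc k = Suc d" using d by simp
  have e2: "N - Suc k = d" using d by simp
  have e3: "N - k = Suc d" using d by simp
  have key: "qint q (Suc N) = qint q (Suc d) + q ^ Suc d * qint q (Suc k)"
    using q1 d by (simp add: qint_def field_simps power_add)
  show ?thesis using True
    apply (simp add: qb_def e1 e2 e3 qfact_Suc)
    apply (simp add: qfact_nz qint_nz field_simps)
    apply (simp add: key algebra_simps)
    done
next
  case False
  then show ?thesis by (cases "k = N") (auto simp: qb_def qfact_nz)
qed

lemma qb_gt: "N < k \<Longrightarrow> qb q N k = 0" by (simp add: qb_def)
lemma qb_0[simp]: "qb q N 0 = 1" by (simp add: qb_def qfact_nz)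

definition F :: "nat \<Rightarrow> 'a \<Rightarrow> 'a" where
  "F n x = (\<Sum>k\<le>n. (-1)^k * q^(k choose 2) * qb q (n-k) k * x^k)"

lemma choose2_Suc: "(Suc j choose 2) = (j choose 2) + j"
  by (cases j) (simp_all add: numeral_2_eq_2)

lemma F_R1: "F (Suc (Suc n)) x = F (Suc n) (q*x) - x * F n (q*x)"
proof -
  have "F (Suc (Suc n)) x = 1 + (\<Sum>j\<le>n. (-1)^Suc j * q^(Suc j choose 2) * qb q (Suc (n-j)) (Suc j) * x^Suc j)"
    unfolding F_def
    apply (subst sum.atMost_Suc_shift)
    apply (subst sum.atMost_Suc)
    apply (simp add: qb_gt binomial_eq_0)
    apply (rule sum.cong, auto simp: Suc_diff_le)
    done
  also have "\<dots> = 1 + (\<Sum>j\<le>n. (-1)^Suc j * q^(Suc j choose 2) * qb q (n-j) (Suc j) * (q*x)^Suc j)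
      - x * (\<Sum>j\<le>n. (-1)^j * q^(j choose 2) * qb q (n-j) j * (q*x)^j)"
  proof -
    have t: "(-1)^Suc j * q^(Suc j choose 2) * qb q (Suc (n-j)) (Suc j) * x^Suc j
      = (-1)^Suc j * q^(Suc j choose 2) * qb q (n-j) (Suc j) * (q*x)^Suc j
        - x * ((-1)^j * q^(j choose 2) * qb q (n-j) j * (q*x)^j)" for j
      unfolding qb_P1 choose2_Suc power_add power_mult_distrib power_Suc
      by (simp add: algebra_simps)
    show ?thesis
      apply (subst sum.cong[OF refl t])
      apply (simp only: sum_subtractf sum_distrib_left add_diff_eq)
      done
  qed
  also have "\<dots> = F (Suc n) (q*x) - x * F n (q*x)"
    unfolding F_def
    by (simp only: sum.atMost_Suc_shift) (simp add: binomial_eq_0)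
  finally show ?thesis .
qed

lemma F_R2:
  assumes q0: "q \<noteq> 0"
  shows "F (Suc (Suc n)) x = F (Suc n) x - x * q^n * F n (x/q)"
proof -
  have "F (Suc (Suc n)) x = 1 + (\<Sum>j\<le>n. (-1)^Suc j * q^(Suc j choose 2) * qb q (Suc (n-j)) (Suc j) * x^Suc j)"
    unfolding F_def
    apply (subst sum.atMost_Suc_shift)
    apply (subst sum.atMost_Suc)
    apply (simp add: qb_gt binomial_eq_0)
    apply (rule sum.cong, auto simp: Suc_diff_le)
    done
  also have "\<dots> = 1 + (\<Sum>j\<le>n. (-1)^Suc j * q^(Suc j choose 2) * qb q (n-j) (Suc j) * x^Suc j)
      - x * q^n * (\<Sum>j\<le>n. (-1)^j * q^(j choose 2) * qb q (n-j) j * (x/q)^j)"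
  proof -
    have t: "(-1)^Suc j * q^(Suc j choose 2) * qb q (Suc (n-j)) (Suc j) * x^Suc j
      = (-1)^Suc j * q^(Suc j choose 2) * qb q (n-j) (Suc j) * x^Suc j
        - x * q^n * ((-1)^j * q^(j choose 2) * qb q (n-j) j * (x/q)^j)" for j
    proof (cases "j \<le> n - j")
      case True
      have e: "n - j - j = n - 2*j" by simp
      have qn': "q ^ n = q ^ (n - 2*j) * q^j * q^j"
        using True by (simp add: power_add[symmetric])
      have h2: "q^j * (x/q)^j = x^j"
        using q0 by (simp add: power_divide)
      then show ?thesis
        unfolding qb_P2 choose2_Suc power_add qn' e power_Suc
        by (simp add: algebra_simps h2)
    next
      case False
      then show ?thesis by (simp add: qb_P2 qb_gt)
    qed
    show ?thesis
      apply (subst sum.cong[OF refl t])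
      apply (simp only: sum_subtractf sum_distrib_left add_diff_eq)
      done
  qed
  also have "\<dots> = F (Suc n) x - x * q^n * F n (x/q)"
    unfolding F_def
    by (simp only: sum.atMost_Suc_shift) (simp add: binomial_eq_0)
  finally show ?thesis .
qed


lemma F_0: "F 0 x = 1" by (simp add: F_def binomial_eq_0)
lemma F_1: "F 1 x = 1" by (simp add: F_def qb_gt binomial_eq_0)

end

definition PP :: "nat \<Rightarrow> nat" where "PP m = m * (3*m - 1) div 2"
definition QQ :: "nat \<Rightarrow> nat" where "QQ m = m * (3*m + 1) div 2"

lemma PP_Suc: "PP (Suc m) = PP m + 3*m + 1"
proof (cases m)
  case 0 then show ?thesis by (simp add: PP_def)
next
  case (Suc k)
  have "Suc m * (3 * Suc m - 1) = m * (3*m - 1) + 2 * (3*m+1)"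
    using Suc by (simp add: algebra_simps)
  then show ?thesis unfolding PP_def by simp
qed

lemma QQ_PP: "QQ m = PP m + m"
proof (cases m)
  case 0 then show ?thesis by (simp add: PP_def QQ_def)
next
  case (Suc k)
  have "m * (3*m+1) = m * (3*m - 1) + 2 * m"
    using Suc by (simp add: algebra_simps)
  then show ?thesis unfolding PP_def QQ_def by simp
qed

context
  fixes q :: "'a::field"
  assumes qn: "\<And>i. i \<ge> 1 \<Longrightarrow> q ^ i \<noteq> 1" and q0: "q \<noteq> 0"
begin

lemma D0_rec: "F q (Suc (Suc n)) 1 = F q (Suc n) 1 - q^n * F q n (1/q)"
  using F_R2[OF qn q0, of n 1] by simp

lemma Dm_rec: "F q (Suc (Suc n)) (1/q) = F q (Suc n) 1 - F q n 1 / q"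
  using F_R1[OF qn, of n "1/q"] q0 by simp

lemma D0_rec': "a = n+2 \<Longrightarrow> b = n+1 \<Longrightarrow> F q a 1 = F q b 1 - q^n * F q n (1/q)"
  using D0_rec[of n] by simp
lemma Dm_rec': "a = n+2 \<Longrightarrow> b = n+1 \<Longrightarrow> F q a (1/q) = F q b 1 - F q n 1 / q"
  using Dm_rec[of n] by simp

lemma closed: "F q (3*m) 1 = (-1)^m * q^PP m \<and> F q (3*m+1) 1 = (-1)^m * q^QQ m
   \<and> F q (3*m+2) 1 = 0 \<and> F q (3*m) (1/q) = (-1)^m * q^PP m / q^(2*m)
   \<and> F q (3*m+1) (1/q) = (-1)^m * q^PP m
   \<and> F q (3*m+2) (1/q) = (-1)^m * (q^QQ m - q^QQ m / q^(m+1))"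
proof (induction m)
  case 0
  have a: "F q 2 1 = 0" using D0_rec[of 0] F_0[OF qn] F_1[OF qn] by (simp add: numeral_2_eq_2)
  have b: "F q 2 (1/q) = 1 - 1/q" using Dm_rec[of 0] F_0[OF qn] F_1[OF qn] by (simp add: numeral_2_eq_2)
  show ?case using a b F_0[OF qn] F_1[OF qn] by (simp add: PP_def QQ_def numeral_2_eq_2)
next
  case (Suc m)
  note IH = Suc.IH
  define s where "s = ((-1)::'a)^m"
  define a where "a = q ^ PP m"
  have QQa: "q ^ QQ m = a * q^m" by (simp add: a_def QQ_PP power_add)
  have P1: "q ^ PP (Suc m) = a * q^(3*m+1)" by (simp add: a_def PP_Suc power_add)
  have Q1: "q ^ QQ (Suc m) = a * q^(3*m+1) * q^Suc m"
    unfolding a_def PP_Suc QQ_PP power_add[symmetric] by (simp add: algebra_simps)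
  have I0: "F q (3*m) 1 = s * a" and I1: "F q (3*m+1) 1 = s * a * q^m" and I2: "F q (3*m+2) 1 = 0"
    and J0: "F q (3*m) (1/q) = s * a / q^(2*m)" and J1: "F q (3*m+1) (1/q) = s * a"
    and J2: "F q (3*m+2) (1/q) = s * (a * q^m - a*q^m / q^(m+1))"
    using IH by (simp_all add: s_def a_def QQa)
  have r0: "F q (3*m+3) 1 = F q (3*m+2) 1 - q^(3*m+1) * F q (3*m+1) (1/q)"
    by (rule D0_rec') simp_all
  have r1: "F q (3*m+3) (1/q) = F q (3*m+2) 1 - F q (3*m+1) 1 / q"
    by (rule Dm_rec') simp_all
  have r2: "F q (3*m+4) 1 = F q (3*m+3) 1 - q^(3*m+2) * F q (3*m+2) (1/q)"
    by (rule D0_rec') simp_all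
  have r3: "F q (3*m+4) (1/q) = F q (3*m+3) 1 - F q (3*m+2) 1 / q"
    by (rule Dm_rec') simp_all
  have r4: "F q (3*m+5) 1 = F q (3*m+4) 1 - q^(3*m+3) * F q (3*m+3) (1/q)"
    by (rule D0_rec') simp_all
  have r5: "F q (3*m+5) (1/q) = F q (3*m+4) 1 - F q (3*m+3) 1 / q"
    by (rule Dm_rec') simp_all
  have K0: "F q (3*m+3) 1 = - s * a * q^(3*m+1)"
    unfolding r0 I2 J1 by (simp add: algebra_simps)
  have L0: "F q (3*m+3) (1/q) = - s * a * q^m / q"
    unfolding r1 I2 I1 by (simp add: algebra_simps)
  have K1: "F q (3*m+4) 1 = - s * a * q^(3*m+1) * q^Suc m"
  proof -
    have "F q (3*m+4) 1 = - s * a * q^(3*m+1) - q^(3*m+2) * (s * (a * q^m - a*q^m / q^(m+1)))"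
      unfolding r2 K0 J2 by simp
    also have "\<dots> = - s * a * q^(3*m+1) * q^Suc m"
      using q0 by (simp add: power_add field_simps)
    finally show ?thesis .
  qed
  have L1: "F q (3*m+4) (1/q) = - s * a * q^(3*m+1)"
    unfolding r3 K0 I2 by simp
  have K2: "F q (3*m+5) 1 = 0"
  proof -
    have "F q (3*m+5) 1 = - s * a * q^(3*m+1) * q^Suc m - q^(3*m+3) * (- s * a * q^m / q)"
      unfolding r4 K1 L0 by simp
    also have "\<dots> = 0"
      using q0 by (simp add: power_add field_simps eval_nat_numeral)
    finally show ?thesis .
  qed
  have L2: "F q (3*m+5) (1/q) = - s * (a * q^(3*m+1) * q^Suc m - a * q^(3*m+1) * q^Suc m / q^(Suc m+1))"
  proof -
    have "F q (3*m+5) (1/q) = - s * a * q^(3*m+1) * q^Suc m - (- s * a * q^(3*m+1)) / q"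
      unfolding r5 K1 K0 by simp
    also have "\<dots> = - s * (a * q^(3*m+1) * q^Suc m - a * q^(3*m+1) * q^Suc m / q^(Suc m+1))"
      using q0 by (simp add: power_add field_simps)
    finally show ?thesis .
  qed
  have L0': "F q (3*m+3) (1/q) = - s * (a * q^(3*m+1)) / q^(2*Suc m)"
    unfolding L0 using q0 by (simp add: power_add field_simps mult_2 flip: power_add)
  have e: "3 * Suc m = 3*m+3" "3 * Suc m + 1 = 3*m+4" "3 * Suc m + 2 = 3*m+5" by simp_all
  show ?case
    unfolding P1 Q1 e(2) e(3) unfolding e(1) K0 K1 K2 L0' L1 L2 s_def using q0 by simp
qed


lemma lpoly_sum: "lpoly n 1 2 (-1) q = (\<Sum>k = 0..n div 2. (-1)^k * q^(k choose 2)
   * (qfact q n / (qfact q k * qfact q (n - 2*k))) * (qfact q (Suc (n - k)) / qfact q (Suc n)))"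
proof (cases "n = 0")
  case True then show ?thesis using qfact_nz[OF qn] by (simp add: lpoly_def binomial_eq_0)
next
  case False
  have "(\<Sum>k = 0..n div 2. (-1)^k * q^(k choose 2)
          * (qfact q n / (qfact q k * qfact q (n - 2*k))) * (qfact q (2 + n - k - 1) / qfact q (2 + n - 1))
          * 1 ^ (n - 2*k))
       = (\<Sum>k = 0..n div 2. (-1)^k * q^(k choose 2)
   * (qfact q n / (qfact q k * qfact q (n - 2*k))) * (qfact q (Suc (n - k)) / qfact q (Suc n)))"
    by (rule sum.cong) (auto simp: Suc_diff_le)
  then show ?thesis using False by (simp add: lpoly_def)
qed

lemma lpoly_F: "lpoly n 1 2 (-1) q * qint q (n+1) * (1-q) = F q n 1 - q^(n+1) * F q n (1/q)"
proof -
  define T where "T k = (-1)^k * q^(k choose 2) * qb q (n-k) k" for k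
  have "F q n 1 - q^(n+1) * F q n (1/q) = (\<Sum>k\<le>n. T k * (1 - q^(n+1) * (1/q)^k))"
  proof -
    have A: "F q n x = (\<Sum>k\<le>n. T k * x^k)" for x by (simp add: F_def[OF qn] T_def)
    have "F q n 1 - q^(n+1) * F q n (1/q) = (\<Sum>k\<le>n. T k) - (\<Sum>k\<le>n. q^(n+1) * (T k * (1/q)^k))"
      by (simp add: A sum_distrib_left)
    also have "\<dots> = (\<Sum>k\<le>n. T k * (1 - q^(n+1) * (1/q)^k))"
      by (simp add: sum_subtractf[symmetric] algebra_simps)
    finally show ?thesis .
  qed
  also have "\<dots> = (\<Sum>k = 0..n div 2. T k * (1 - q^(n+1) * (1/q)^k))"
    by (rule sum.mono_neutral_right) (auto simp: T_def qb_gt[OF qn])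
  also have "\<dots> = lpoly n 1 2 (-1) q * qint q (n+1) * (1-q)"
    unfolding lpoly_sum sum_distrib_right
  proof (rule sum.cong[OF refl])
    fix k assume k: "k \<in> {0..n div 2}"
    hence kk: "k \<le> n - k" by auto
    have e1: "n - k - k = n - 2*k" by simp
    have f1: "qfact q (Suc (n-k)) = qfact q (n-k) * qint q (Suc (n-k))" by (rule qfact_Suc)
    have f2: "qfact q (Suc n) = qfact q n * qint q (Suc n)" by (rule qfact_Suc)
    have i1': "qint q (Suc (n-k)) = (1 - q^(Suc (n-k))) / (1-q)" by (simp add: qint_def)
    have p1: "q^(n+1) * (1/q)^k = q^(Suc (n-k))"
    proof -
      have "q^(n+1) = q^(Suc (n-k)) * q^k" using kk by (simp flip: power_add)
      then show ?thesis using q0 by (simp add: power_divide)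
    qed
    have nz: "qfact q n \<noteq> 0" "qfact q k \<noteq> 0" "qfact q (n-2*k) \<noteq> 0" "qfact q (n-k) \<noteq> 0"
      "qint q (Suc n) \<noteq> 0" using qfact_nz[OF qn] qint_nz[OF qn] by auto
    show "T k * (1 - q^(n+1) * (1/q)^k) = (-1)^k * q^(k choose 2)
       * (qfact q n / (qfact q k * qfact q (n - 2*k))) * (qfact q (Suc (n - k)) / qfact q (Suc n))
       * qint q (n+1) * (1-q)"
      unfolding T_def p1 qb_def e1 f1 f2 using kk nz
      using q1[OF qn] by (simp add: i1' field_simps)
  qed
  finally show ?thesis by simp
qed


end

lemma QQ_final: "(3*n^2 + 5*n + 4) div 2 = QQ n + 2*n + 2"
proof -
  have "3*n^2 + 5*n + 4 = n*(3*n+1) + 2*(2*n+2)" by (simp add: power2_eq_square algebra_simps)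
  then show ?thesis unfolding QQ_def by simp
qed

lemma lpoly_div:
  fixes q :: "'a::field"
  assumes qn: "\<And>i. i \<ge> 1 \<Longrightarrow> q ^ i \<noteq> 1" and q0: "q \<noteq> 0" and M: "M = N+1"
  shows "lpoly N 1 2 (-1) q * qint q M = (F q N 1 - q^M * F q N (1/q)) / (1-q)"
  using lpoly_F[OF qn q0, of N] q1[OF qn] M by (simp add: field_simps)

theorem mainTheorem11:
  fixes n :: nat
  shows "lpoly (3*n) 1 2 (-1) qX * qint qX (3*n+1)
           = (-1) ^ n * qX ^ (n * (3*n - 1) div 2) * qint qX (n+1)
       \<and> lpoly (3*n+1) 1 2 (-1) qX * qint qX (3*n+2)
           = (-1) ^ n * qX ^ (n * (3*n + 1) div 2) * qint qX (n+1) * (1 + qX ^ (n+1))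
       \<and> lpoly (3*n+2) 1 2 (-1) qX * qint qX (3*n+3)
           = (-1) ^ n * qX ^ ((3*n^2 + 5*n + 4) div 2) * qint qX (n+1)"
proof -
  define q where "q = qX"
  have qn: "\<And>i. i \<ge> 1 \<Longrightarrow> q ^ i \<noteq> 1" unfolding q_def by (rule qX_pow_ne1)
  have q0: "q \<noteq> 0" unfolding q_def by (rule qX_nz)
  have q1: "1 - q \<noteq> 0" using q1[OF qn] by simp
  note C = closed[OF qn q0, of n]
  define s where "s = ((-1)::int poly fract)^n"
  define a where "a = q ^ PP n"
  have QQa: "q ^ QQ n = a * q^n" by (simp add: a_def QQ_PP power_add)
  have qi: "qint q (Suc n) = (1 - q^(Suc n)) / (1-q)" by (simp add: qint_def)
  have A: "lpoly (3*n) 1 2 (-1) q * qint q (3*n+1) = s * q ^ (n * (3*n - 1) div 2) * qint q (n+1)"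
  proof -
    have "lpoly (3*n) 1 2 (-1) q * qint q (3*n+1) = (s*a - q^(3*n+1) * (s * a / q^(2*n))) / (1-q)"
      using lpoly_div[OF qn q0, of "3*n+1" "3*n"] C by (simp add: s_def a_def)
    also have "\<dots> = s * a * qint q (n+1)"
    proof -
      have "3*n+1 = (2*n) + (n+1)" by simp
      hence "q^(3*n+1) = q^(2*n) * q^(n+1)" by (simp only: power_add)
      then show ?thesis using q0 q1 by (simp add: qi field_simps)
    qed
    finally show ?thesis by (simp add: a_def PP_def)
  qed
  have B: "lpoly (3*n+1) 1 2 (-1) q * qint q (3*n+2) = s * q ^ (n * (3*n + 1) div 2) * qint q (n+1) * (1 + q^(n+1))"
  proof -
    have "lpoly (3*n+1) 1 2 (-1) q * qint q (3*n+2) = (s*(a*q^n) - q^(3*n+2) * (s * a)) / (1-q)"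
      using lpoly_div[OF qn q0, of "3*n+2" "3*n+1"] C by (simp add: s_def a_def QQa)
    also have "\<dots> = s * (a*q^n) * qint q (n+1) * (1 + q^(n+1))"
    proof -
      have "3*n+2 = n + (n+1) + (n+1)" by simp
      hence "q^(3*n+2) = q^n * q^(n+1) * q^(n+1)" by (simp only: power_add)
      then show ?thesis using q0 q1 by (simp add: qi field_simps)
    qed
    finally show ?thesis by (simp add: QQa[symmetric] QQ_def)
  qed
  have D: "lpoly (3*n+2) 1 2 (-1) q * qint q (3*n+3) = s * q ^ ((3*n^2 + 5*n + 4) div 2) * qint q (n+1)"
  proof -
    have "lpoly (3*n+2) 1 2 (-1) q * qint q (3*n+3) = (0 - q^(3*n+3) * (s * (a*q^n - a*q^n/q^(n+1)))) / (1-q)"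
      using lpoly_div[OF qn q0, of "3*n+3" "3*n+2"] C by (simp add: s_def a_def QQa)
    also have "\<dots> = s * (a*q^n * q^(2*n+2)) * qint q (n+1)"
    proof -
      have "3*n+3 = (2*n+2) + (n+1)" by simp
      hence "q^(3*n+3) = q^(2*n+2) * q^(n+1)" by (simp only: power_add)
      then show ?thesis using q0 q1 by (simp add: qi field_simps)
    qed
    finally show ?thesis by (simp add: QQa[symmetric] QQ_final power_add)
  qed
  show ?thesis using A B D by (simp add: q_def s_def)
qed

end
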